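(* Let $n,\ell$ be positive integers with $\ell\mid n$, and let $p_0,\dots,p_{n/\ell-1}\in(0,1)$. Let $T$ be the runtime of the (1+1) EA on $\mathrm{BLO}_\ell$ using mutation rate $p_m$ whenever the current individual has fitness $m$. Then \[ \mathbb{E}[T]=\sum_{m=0}^{n/\ell-1}\frac{1}{(1-p_m)^{m\ell}}\sum_{j=1}^{\ell}\binom{\ell}{j}\frac{1}{1-(1-2p_m)^j}. \] In particular, for a static mutation rate $p\in(0,1)$ (i.e. $p_m=p$ for all $m$), \[ \mathbb{E}[T]=\frac{(1-p)^{-n+\ell}-(1-p)^{\ell}}{1-(1-p)^{\ell}}\sum_{j=1}^{\ell}\binom{\ell}{j}\frac{1}{1-(1-2p)^j}. \]
   Context: For positive integers $n,\ell$ with $\ell\mid n$, the BlockLeadingOnes function $\mathrm{BLO}_\ell:\{0,1\}^n\to\{0,\dots,n/\ell\}$ is $\mathrm{BLO}_\ell(x)=\sum_{m=1}^{n/\ell}\prod_{i=1}^{m\ell}x_i$, i.e. the number of leading blocks of $\ell$ consecutive bits that consist only of ones (equivalently $\lfloor \mathrm{LO}(x)/\ell\rfloor$ where $\mathrm{LO}(x)$ is the number of leading ones of $x$). The (1+1) EA: $x_0$ is uniform on $\{0,1\}^n$; in iteration $t=1,2,\dots$ an offspring $y$ is obtained from $x_{t-1}$ by flipping each bit independently with probability $q_t$, where $q_t=p_{\mathrm{BLO}_\ell(x_{t-1})}$ (fitness-dependent rate), and $x_t=y$ if $\mathrm{BLO}_\ell(y)\ge \mathrm{BLO}_\ell(x_{t-1})$,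 otherwise $x_t=x_{t-1}$. The runtime is $T=\min\{t\ge0:\mathrm{BLO}_\ell(x_t)=n/\ell\}$. *)

theory Defs
  imports "HOL-Probability.Probability"
begin

text \<open>Bit strings of length n are bool lists; bit x_i (1-based) is x ! (i - 1).\<close>

definition BLO :: "nat \<Rightarrow> bool list \<Rightarrow> nat" where
  "BLO l x = (\<Sum>m = 1..length x div l. \<Prod>i = 1..m * l. (if x ! (i - 1) then 1 else 0))"

fun flip_mask :: "nat \<Rightarrow> real \<Rightarrow> bool list pmf" where
  "flip_mask 0 q = return_pmf []"
| "flip_mask (Suc k) q =
     bernoulli_pmf q \<bind> (\<lambda>b. flip_mask k q \<bind> (\<lambda>bs. return_pmf (b # bs)))"

text \<open>Randomness used in one iteration: for every fitness level m < n div l an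
  independent mask with rate p m; the iteration uses the mask belonging to the
  current fitness, so the offspring is obtained by flipping each bit independently
  with probability p (BLO l x).  (Equal in distribution to the (1+1) EA step.)\<close>
definition step_rand :: "nat \<Rightarrow> nat \<Rightarrow> (nat \<Rightarrow> real) \<Rightarrow> (nat \<Rightarrow> bool list) pmf" where
  "step_rand n l p = Pi_pmf {..< n div l} [] (\<lambda>m. flip_mask n (p m))"

definition ea_step :: "nat \<Rightarrow> bool list \<Rightarrow> (nat \<Rightarrow> bool list) \<Rightarrow> bool list" where
  "ea_step l x r =
     (let y = map2 (\<lambda>a b. a \<noteq> b) x (r (BLO l x))
      in if BLO l y \<ge> BLO l x then y else x)"

fun ea_run :: "nat \<Rightarrow> bool list \<Rightarrow> (nat \<Rightarrow> bool list) stream \<Rightarrow> nat \<Rightarrow> bool list" where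
  "ea_run l x0 \<omega> 0 = x0"
| "ea_run l x0 \<omega> (Suc t) = ea_step l (ea_run l x0 \<omega> t) (\<omega> !! t)"

definition ea_space :: "nat \<Rightarrow> nat \<Rightarrow> (nat \<Rightarrow> real) \<Rightarrow>
    (bool list \<times> (nat \<Rightarrow> bool list) stream) measure" where
  "ea_space n l p =
     measure_pmf (pmf_of_set {x. length x = n}) \<Otimes>\<^sub>M stream_space (measure_pmf (step_rand n l p))"

definition ea_runtime :: "nat \<Rightarrow> nat \<Rightarrow> bool list \<times> (nat \<Rightarrow> bool list) stream \<Rightarrow> enat" where
  "ea_runtime n l \<omega> =
     (if \<exists>t. BLO l (ea_run l (fst \<omega>) (snd \<omega>) t) = n div l
      then enat (LEAST t. BLO l (ea_run l (fst \<omega>) (snd \<omega>) t) = n div l)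
      else \<infinity>)"

definition ea_expected_runtime :: "nat \<Rightarrow> nat \<Rightarrow> (nat \<Rightarrow> real) \<Rightarrow> ennreal" where
  "ea_expected_runtime n l p =
     (\<integral>\<^sup>+ \<omega>. ennreal_of_enat (ea_runtime n l \<omega>) \<partial>ea_space n l p)"

end

theory Submission
  imports Defs
begin

definition LL :: "nat \<Rightarrow> bool list set" where "LL N = {xs. length xs = N}"
definition wt :: "real \<Rightarrow> bool list \<Rightarrow> real" where
  "wt q M = prod_list (map (\<lambda>b. if b then q else 1 - q) M)"
definition xorl :: "bool list \<Rightarrow> bool list \<Rightarrow> bool list" where
  "xorl x M = map2 (\<lambda>a b. a \<noteq> b) x M"

lemma finite_LL[simp]: "finite (LL N)"
proof -
  have "LL N = {xs. set xs \<subseteq> UNIV \<and> length xs = N}" unfolding LL_def by simp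
  then show ?thesis using finite_lists_length_eq[of "UNIV::bool set" N] by simp
qed

lemma card_LL[simp]: "card (LL N) = 2 ^ N"
proof -
  have "LL N = {xs. set xs \<subseteq> UNIV \<and> length xs = N}" unfolding LL_def by simp
  then show ?thesis using card_lists_length_eq[of "UNIV::bool set" N] by simp
qed

lemma LL_0: "LL 0 = {[]}" unfolding LL_def by auto

lemma wt_append: "wt q (u @ v) = wt q u * wt q v"
  unfolding wt_def by simp

lemma wt_nonneg: "0 \<le> q \<Longrightarrow> q \<le> 1 \<Longrightarrow> 0 \<le> wt q M"
  unfolding wt_def by (induction M) auto

lemma sum_LL_append:
  "(\<Sum>M\<in>LL (a + b). F M) = (\<Sum>u\<in>LL a. \<Sum>v\<in>LL b. F (u @ v))"
proof -
  have bij: "bij_betw (\<lambda>(u, v). u @ v) (LL a \<times> LL b) (LL (a + b))"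
  proof (rule bij_betw_imageI)
    show "inj_on (\<lambda>(u, v). u @ v) (LL a \<times> LL b)"
    proof (rule inj_onI)
      fix z1 z2 assume "z1 \<in> LL a \<times> LL b" "z2 \<in> LL a \<times> LL b"
        "(\<lambda>(u, v). u @ v) z1 = (\<lambda>(u, v). u @ v) z2"
      then show "z1 = z2" by (cases z1, cases z2) (simp add: LL_def)
    qed
    show "(\<lambda>(u, v). u @ v) ` (LL a \<times> LL b) = LL (a + b)"
    proof (rule set_eqI, rule iffI)
      fix M assume "M \<in> LL (a + b)"
      then have "(take a M, drop a M) \<in> LL a \<times> LL b" "M = (\<lambda>(u, v). u @ v) (take a M, drop a M)"
        by (auto simp: LL_def)
      then show "M \<in> (\<lambda>(u, v). u @ v) ` (LL a \<times> LL b)" by (rule rev_image_eqI)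
    next
      fix M assume "M \<in> (\<lambda>(u, v). u @ v) ` (LL a \<times> LL b)"
      then show "M \<in> LL (a + b)" by (auto simp: LL_def)
    qed
  qed
  have "(\<Sum>M\<in>LL (a + b). F M) = (\<Sum>z\<in>LL a \<times> LL b. F ((\<lambda>(u, v). u @ v) z))"
    using sum.reindex_bij_betw[OF bij, of F] by simp
  also have "\<dots> = (\<Sum>u\<in>LL a. \<Sum>v\<in>LL b. F (u @ v))"
    by (simp add: sum.cartesian_product split_def)
  finally show ?thesis .
qed

lemma LL_Suc_sum: "(\<Sum>M\<in>LL (Suc N). F M) = (\<Sum>v\<in>LL N. F (True # v)) + (\<Sum>v\<in>LL N. F (False # v))"
proof -
  have "LL 1 = {[True], [False]}" unfolding LL_def by (auto simp: length_Suc_conv)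
  then show ?thesis using sum_LL_append[of F 1 N] by simp
qed

lemma sum_wt: "(\<Sum>M\<in>LL N. wt q M) = 1"
proof (induction N)
  case 0
  then show ?case by (simp add: LL_0 wt_def)
next
  case (Suc N)
  have "(\<Sum>M\<in>LL (Suc N). wt q M) = q * (\<Sum>v\<in>LL N. wt q v) + (1 - q) * (\<Sum>v\<in>LL N. wt q v)"
    unfolding LL_Suc_sum by (simp add: wt_def sum_distrib_left)
  then show ?case using Suc by simp
qed

lemma pmf_map_Cons: "pmf (map_pmf (Cons b) F) M = (case M of [] \<Rightarrow> 0 | c # cs \<Rightarrow> if c = b then pmf F cs else 0)"
proof (cases M)
  case Nil
  then show ?thesis by (auto simp: pmf_eq_0_set_pmf)
next
  case (Cons c cs)
  show ?thesis
  proof (cases "c = b")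
    case True
    then show ?thesis using Cons pmf_map_inj'[of "Cons b" F cs] by (simp add: inj_def)
  next
    case False
    then show ?thesis using Cons by (auto simp: pmf_eq_0_set_pmf)
  qed
qed

lemma pmf_flip: "0 \<le> q \<Longrightarrow> q \<le> 1 \<Longrightarrow>
  pmf (flip_mask N q) M = (if length M = N then wt q M else 0)"
proof (induction N arbitrary: M)
  case 0
  then show ?case by (auto simp: wt_def)
next
  case (Suc N)
  have "flip_mask (Suc N) q = bernoulli_pmf q \<bind> (\<lambda>b. map_pmf (Cons b) (flip_mask N q))"
    by (simp add: map_pmf_def)
  then have "pmf (flip_mask (Suc N) q) M =
     q * pmf (map_pmf (Cons True) (flip_mask N q)) M + (1 - q) * pmf (map_pmf (Cons False) (flip_mask N q)) M"
    using Suc.prems by (simp add: pmf_bind)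
  show ?case
  proof (cases M)
    case Nil
    then show ?thesis using \<open>pmf (flip_mask (Suc N) q) M = _\<close> by (simp add: pmf_map_Cons)
  next
    case (Cons c cs)
    have ih: "pmf (flip_mask N q) cs = (if length cs = N then wt q cs else 0)"
      using Suc.IH Suc.prems by blast
    show ?thesis
    proof (cases c)
      case True
      then have "pmf (flip_mask (Suc N) q) M = q * pmf (flip_mask N q) cs"
        using \<open>pmf (flip_mask (Suc N) q) M = _\<close> Cons by (simp add: pmf_map_Cons)
      then show ?thesis using ih Cons True by (simp add: wt_def)
    next
      case False
      then have "pmf (flip_mask (Suc N) q) M = (1 - q) * pmf (flip_mask N q) cs"
        using \<open>pmf (flip_mask (Suc N) q) M = _\<close> Cons by (simp add: pmf_map_Cons)
      then show ?thesis using ih Cons False by (simp add: wt_def)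
    qed
  qed
qed

lemma set_flip: "0 \<le> q \<Longrightarrow> q \<le> 1 \<Longrightarrow> M \<in> set_pmf (flip_mask N q) \<Longrightarrow> M \<in> LL N"
  using pmf_flip[of q N M] by (auto simp: set_pmf_iff LL_def split: if_splits)

lemma length_xorl[simp]: "length (xorl x M) = min (length x) (length M)"
  unfolding xorl_def by simp

lemma xorl_append: "length a = length c \<Longrightarrow> xorl (a @ b) (c @ d) = xorl a c @ xorl b d"
  unfolding xorl_def by simp

lemma xorl_xorl: "length x = length M \<Longrightarrow> xorl (xorl x M) M = x"
  unfolding xorl_def by (induction x M rule: list_induct2) auto

lemma sum_xorl_shift: "v \<in> LL N \<Longrightarrow> (\<Sum>s\<in>LL N. F (xorl s v)) = (\<Sum>s\<in>LL N. F s)"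
  by (rule sum.reindex_bij_witness[where i="\<lambda>s. xorl s v" and j="\<lambda>s. xorl s v"])
     (auto simp: LL_def xorl_xorl)

lemma take_rep_iff: "N \<le> length x \<Longrightarrow> (take N x = replicate N True) \<longleftrightarrow> (\<forall>j<N. x ! j)"
  by (auto simp: list_eq_iff_nth_eq)

lemma BLO_card:
  assumes "l > 0" "length x = k * l"
  shows "BLO l x = card {m\<in>{1..k}. take (m*l) x = replicate (m*l) True}"
proof -
  have kk: "length x div l = k" using assms by simp
  have "BLO l x = (\<Sum>m = 1..k. if take (m*l) x = replicate (m*l) True then 1 else 0)"
    unfolding BLO_def kk
  proof (rule sum.cong[OF refl])
    fix m assume m: "m \<in> {1..k}"
    then have ml: "m * l \<le> length x" using assms by simp
    show "(\<Prod>i = 1..m * l. if x ! (i - 1) then 1 else 0) =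
          (if take (m * l) x = replicate (m * l) True then 1 else (0::nat))"
    proof (cases "\<forall>j<m*l. x ! j")
      case True
      then have "(\<Prod>i = 1..m * l. if x ! (i - 1) then 1 else 0) = (\<Prod>i = 1..m * l. (1::nat))"
        by (intro prod.cong) auto
      then show ?thesis using True take_rep_iff[OF ml] by simp
    next
      case False
      then obtain j where j: "j < m*l" "\<not> x ! j" by auto
      then have "Suc j \<in> {1..m*l}" "(if x ! (Suc j - 1) then 1 else 0) = (0::nat)" by auto
      then have "(\<Prod>i = 1..m * l. if x ! (i - 1) then 1 else 0) = (0::nat)"
        by (intro prod_zero) blast+
      moreover have "take (m * l) x \<noteq> replicate (m * l) True" using False take_rep_iff[OF ml] by simp
      ultimately show ?thesis by (simp only: if_False)
    qed
  qed
  also have "\<dots> = card {m\<in>{1..k}. take (m*l) x = replicate (m*l) True}"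
    by (simp add: sum.inter_filter[symmetric])
  finally show ?thesis .
qed

lemma BLO_ge:
  assumes "l > 0" "length x = k * l" "m \<le> k"
  shows "m \<le> BLO l x \<longleftrightarrow> take (m*l) x = replicate (m*l) True"
proof -
  let ?P = "\<lambda>m. take (m*l) x = replicate (m*l) True"
  have mono: "?P m'" if "?P m2" "m' \<le> m2" "m2 \<le> k" for m' m2
  proof -
    have "m' * l \<le> m2 * l" using that by simp
    then have "take (m'*l) x = take (m'*l) (take (m2*l) x)" by (simp add: min_def)
    then show ?thesis using that(1) \<open>m' * l \<le> m2 * l\<close> by (simp add: min_def)
  qed
  have B: "BLO l x = card {m\<in>{1..k}. ?P m}" using BLO_card[OF assms(1,2)] .
  show ?thesis
  proof
    assume "m \<le> BLO l x"
    show "?P m"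
    proof (rule ccontr)
      assume np: "\<not> ?P m"
      then have "m \<ge> 1" by (cases m) auto
      have "{m\<in>{1..k}. ?P m} \<subseteq> {1..m-1}"
      proof
        fix j assume "j \<in> {m\<in>{1..k}. ?P m}"
        then have "j \<in> {1..k}" "?P j" by auto
        then show "j \<in> {1..m-1}" using mono[of j m] np by (cases "m \<le> j") auto
      qed
      then have "card {m\<in>{1..k}. ?P m} \<le> m - 1" using card_mono[of "{1..m-1}"] by fastforce
      then show False using \<open>m \<le> BLO l x\<close> B \<open>m \<ge> 1\<close> by simp
    qed
  next
    assume "?P m"
    have "{1..m} \<subseteq> {m\<in>{1..k}. ?P m}" using mono[OF \<open>?P m\<close>] assms(3) by auto
    then have "card {1..m} \<le> card {m\<in>{1..k}. ?P m}" by (intro card_mono) auto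
    then show "m \<le> BLO l x" using B by simp
  qed
qed

lemma BLO_le:
  assumes "l > 0" "length x = k * l" shows "BLO l x \<le> k"
proof -
  have "card {m\<in>{1..k}. take (m*l) x = replicate (m*l) True} \<le> card {1..k}"
    by (rule card_mono) auto
  then show ?thesis using BLO_card[OF assms] by simp
qed

definition stepM :: "nat \<Rightarrow> bool list \<Rightarrow> bool list \<Rightarrow> bool list" where
  "stepM l x M = (let y = xorl x M in if BLO l y \<ge> BLO l x then y else x)"

lemma ea_step_eq: "ea_step l x r = stepM l x (r (BLO l x))"
  unfolding ea_step_def stepM_def xorl_def by simp

lemma stepM_LL: "x \<in> LL N \<Longrightarrow> M \<in> LL N \<Longrightarrow> stepM l x M \<in> LL N"
  unfolding stepM_def Let_def LL_def by simp

lemma xorl_rep_True: "length u = N \<Longrightarrow> xorl (replicate N True) u = map Not u"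
  unfolding xorl_def by (induction u arbitrary: N) auto

lemma map_Not_rep: "(map Not u = replicate (length u) True) \<longleftrightarrow> u = replicate (length u) False"
  by (induction u) auto

locale ea =
  fixes n l :: nat and p :: "nat \<Rightarrow> real"
  assumes n_pos: "n > 0" and l_pos: "l > 0" and ldvd: "l dvd n"
    and p01: "\<And>m. m < n div l \<Longrightarrow> 0 < p m \<and> p m < 1"
begin

abbreviation "k \<equiv> n div l"

lemma n_eq: "n = k * l" using ldvd by simp

lemma k_pos: "k > 0" using n_pos l_pos ldvd by (auto elim!: dvdE)

lemma len_class: "i < k \<Longrightarrow> Suc i * l \<le> n"
  using n_eq by (metis Suc_leI mult_le_mono1)

lemma class_len:
  assumes "i < k" "b \<in> LL l" "s \<in> LL (n - Suc i * l)"
  shows "length (replicate (i*l) True @ b @ s) = n"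
  using assms len_class[OF assms(1)] by (simp add: LL_def algebra_simps)

lemma BLO_class:
  assumes "i < k" "b \<in> LL l" "b \<noteq> replicate l True" "s \<in> LL (n - Suc i * l)"
  shows "BLO l (replicate (i*l) True @ b @ s) = i"
proof -
  let ?x = "replicate (i*l) True @ b @ s"
  have len: "length ?x = k * l" using class_len[OF assms(1,2,4)] n_eq by simp
  have lb: "length b = l" using assms(2) by (simp add: LL_def)
  have "i \<le> BLO l ?x" using BLO_ge[OF l_pos len, of i] assms(1) by simp
  moreover have "\<not> Suc i \<le> BLO l ?x"
  proof
    assume "Suc i \<le> BLO l ?x"
    then have "take (Suc i * l) ?x = replicate (Suc i * l) True"
      using BLO_ge[OF l_pos len, of "Suc i"] assms(1) by simp
    moreover have "Suc i * l = i*l + l" by simp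
    ultimately have "take (i*l + l) ?x = replicate (i*l) True @ replicate l True"
      by (simp only: replicate_add)
    moreover have "take (i*l + l) ?x = replicate (i*l) True @ b" using lb by simp
    ultimately have "replicate (i*l) True @ b = replicate (i*l) True @ replicate l True"
      by simp
    then show False using assms(3) by simp
  qed
  ultimately show ?thesis by simp
qed

lemma tgt_iff: "x \<in> LL n \<Longrightarrow> BLO l x = k \<longleftrightarrow> x = replicate n True"
proof -
  assume x: "x \<in> LL n"
  then have len: "length x = k * l" using n_eq by (simp add: LL_def)
  have "BLO l x = k \<longleftrightarrow> k \<le> BLO l x" using BLO_le[OF l_pos len] by auto
  also have "\<dots> \<longleftrightarrow> take (k*l) x = replicate (k*l) True" using BLO_ge[OF l_pos len, of k] by simp
  also have "\<dots> \<longleftrightarrow> x = replicate n True" using len n_eq by simp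
  finally show ?thesis .
qed

lemma BLO_all: "BLO l (replicate n True) = k"
  using tgt_iff[of "replicate n True"] by (simp add: LL_def)

lemma step_class:
  assumes "i < k" "b \<in> LL l" "b \<noteq> replicate l True" "s \<in> LL (n - Suc i * l)" "M \<in> LL n"
  shows "stepM l (replicate (i*l) True @ b @ s) M =
    (if take (i*l) M = replicate (i*l) False
     then replicate (i*l) True @ xorl b (take l (drop (i*l) M)) @ xorl s (drop (Suc i * l) M)
     else replicate (i*l) True @ b @ s)"
proof -
  let ?x = "replicate (i*l) True @ b @ s"
  let ?u = "take (i*l) M" and ?v = "take l (drop (i*l) M)" and ?t = "drop (Suc i * l) M"
  have lM: "length M = n" using assms(5) by (simp add: LL_def)
  have lb: "length b = l" using assms(2) by (simp add: LL_def)
  have ls: "length s = n - Suc i * l" using assms(4) by (simp add: LL_def)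
  have le: "Suc i * l \<le> n" using len_class[OF assms(1)] .
  have Msplit: "M = ?u @ ?v @ ?t"
  proof -
    have "drop l (drop (i*l) M) = ?t" by (simp add: algebra_simps)
    then show ?thesis by (metis append_take_drop_id)
  qed
  have lu: "length ?u = i*l" using lM le by simp
  have lv: "length ?v = l" using lM le by simp
  have lt: "length ?t = n - Suc i * l" using lM by simp
  have y: "xorl ?x M = map Not ?u @ xorl b ?v @ xorl s ?t"
  proof -
    have "xorl ?x M = xorl (replicate (i*l) True @ (b @ s)) (?u @ (?v @ ?t))" using Msplit by simp
    also have "\<dots> = xorl (replicate (i*l) True) ?u @ xorl (b @ s) (?v @ ?t)"
      by (rule xorl_append) (simp add: lu del: length_take)
    also have "\<dots> = map Not ?u @ xorl b ?v @ xorl s ?t"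
      using xorl_rep_True[OF lu] xorl_append[of b ?v s ?t] lb lv by simp
    finally show ?thesis .
  qed
  have ly: "length (xorl ?x M) = k * l" using lM class_len[OF assms(1,2,4)] n_eq by simp
  have "BLO l ?x \<le> BLO l (xorl ?x M) \<longleftrightarrow> i \<le> BLO l (xorl ?x M)"
    using BLO_class[OF assms(1-4)] by simp
  also have "\<dots> \<longleftrightarrow> take (i*l) (xorl ?x M) = replicate (i*l) True"
    using BLO_ge[OF l_pos ly, of i] assms(1) by simp
  also have "\<dots> \<longleftrightarrow> map Not ?u = replicate (i*l) True" using y lu by simp
  also have "\<dots> \<longleftrightarrow> ?u = replicate (i*l) False" using map_Not_rep[of ?u] lu by simp
  finally have c: "BLO l ?x \<le> BLO l (xorl ?x M) \<longleftrightarrow> ?u = replicate (i*l) False" .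
  show ?thesis
  proof (cases "?u = replicate (i*l) False")
    case True
    then have "map Not ?u = replicate (i*l) True" by simp
    then show ?thesis using c True y unfolding stepM_def Let_def by simp
  next
    case False
    then show ?thesis using c unfolding stepM_def Let_def by simp
  qed
qed

end

fun chi :: "bool list \<Rightarrow> bool list \<Rightarrow> real" where
  "chi [] _ = 1"
| "chi (s # ss) [] = 1"
| "chi (s # ss) (b # bs) = (if s \<and> \<not> b then -1 else 1) * chi ss bs"

definition cnt :: "bool list \<Rightarrow> nat" where "cnt s = length (filter id s)"

definition hf :: "nat \<Rightarrow> real \<Rightarrow> bool list \<Rightarrow> real" where
  "hf N r b = (\<Sum>s\<in>LL N - {replicate N False}. (1 - chi s b) / (1 - r ^ cnt s))"

lemma chi_True: "chi s (replicate N True) = 1"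
proof (induction s arbitrary: N)
  case (Cons a s)
  then show ?case by (cases N) simp_all
qed simp

lemma chi_False: "chi (replicate N False) b = 1"
  by (induction N arbitrary: b) (auto, case_tac b, auto)

lemma hf_True: "hf N r (replicate N True) = 0"
  unfolding hf_def by (simp add: chi_True)

lemma cnt_Cons: "cnt (c # s) = (if c then Suc (cnt s) else cnt s)"
  unfolding cnt_def by simp

lemma exp_chi:
  assumes "length b = N" "length s = N"
  shows "(\<Sum>v\<in>LL N. wt q v * chi s (xorl b v)) = chi s b * (1 - 2*q) ^ cnt s"
  using assms
proof (induction N arbitrary: s b)
  case 0
  then show ?case by (simp add: LL_0 wt_def xorl_def cnt_def)
next
  case (Suc N)
  obtain s0 s' where s: "s = s0 # s'" "length s' = N" using Suc.prems by (cases s) auto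
  obtain b0 b' where b: "b = b0 # b'" "length b' = N" using Suc.prems by (cases b) auto
  have IH: "(\<Sum>v\<in>LL N. wt q v * chi s' (xorl b' v)) = chi s' b' * (1 - 2*q) ^ cnt s'"
    using Suc.IH s b by blast
  have e: "\<And>c v. wt q (c # v) * chi s (xorl b (c # v)) =
     ((if c then q else 1 - q) * (if s0 \<and> \<not> (b0 \<noteq> c) then -1 else 1)) * (wt q v * chi s' (xorl b' v))"
    using s b by (simp add: wt_def xorl_def)
  have "(\<Sum>v\<in>LL (Suc N). wt q v * chi s (xorl b v)) =
      (q * (if s0 \<and> b0 then -1 else 1) + (1 - q) * (if s0 \<and> \<not> b0 then -1 else 1)) *
      (\<Sum>v\<in>LL N. wt q v * chi s' (xorl b' v))"
  proof -
    let ?X = "\<Sum>v\<in>LL N. wt q v * chi s' (xorl b' v)"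
    have "(\<Sum>v\<in>LL (Suc N). wt q v * chi s (xorl b v)) =
       (q * (if s0 \<and> \<not> (b0 \<noteq> True) then -1 else 1)) * ?X + ((1 - q) * (if s0 \<and> \<not> (b0 \<noteq> False) then -1 else 1)) * ?X"
      by (simp only: LL_Suc_sum e sum_distrib_left[symmetric] if_True if_False)
    then show ?thesis by (simp add: algebra_simps)
  qed
  also have "\<dots> = chi s b * (1 - 2*q) ^ cnt s"
    unfolding IH using s b by (auto simp: cnt_Cons algebra_simps)
  finally show ?case .
qed

lemma sum_chi_s:
  assumes "length b = N"
  shows "(\<Sum>s\<in>LL N. chi s b) = (if b = replicate N True then 2 ^ N else 0)"
  using assms
proof (induction N arbitrary: b)
  case 0
  then show ?case by (simp add: LL_0)
next
  case (Suc N)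
  obtain b0 b' where b: "b = b0 # b'" "length b' = N" using Suc.prems by (cases b) auto
  have "(\<Sum>s\<in>LL (Suc N). chi s b) = (if b0 then 2 else 0) * (\<Sum>s\<in>LL N. chi s b')"
    unfolding LL_Suc_sum using b by (auto simp: sum_negf)
  then show ?case using Suc.IH[OF b(2)] b by auto
qed

lemma sum_chi_b:
  assumes "length s = N"
  shows "(\<Sum>b\<in>LL N. chi s b) = (if s = replicate N False then 2 ^ N else 0)"
  using assms
proof (induction N arbitrary: s)
  case 0
  then show ?case by (simp add: LL_0)
next
  case (Suc N)
  obtain s0 s' where s: "s = s0 # s'" "length s' = N" using Suc.prems by (cases s) auto
  have "(\<Sum>b\<in>LL (Suc N). chi s b) = (if s0 then 0 else 2) * (\<Sum>b\<in>LL N. chi s' b)"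
    unfolding LL_Suc_sum using s by (auto simp: sum_negf)
  then show ?case using Suc.IH[OF s(2)] s by auto
qed

lemma cnt_pos: "length s = N \<Longrightarrow> s \<noteq> replicate N False \<Longrightarrow> cnt s > 0"
  unfolding cnt_def by (induction s arbitrary: N) (auto simp: replicate_Suc split: nat.splits)

lemma pow_ne_1:
  fixes r :: real
  assumes "\<bar>r\<bar> < 1" "c > 0" shows "1 - r ^ c \<noteq> 0"
proof -
  have "\<bar>r\<bar> ^ c < 1" using assms by (simp add: power_less_one_iff)
  then have "\<bar>r ^ c\<bar> < 1" by (simp add: power_abs)
  then show ?thesis by auto
qed

lemma frac_aux:
  fixes c R :: real assumes "1 - R \<noteq> 0" shows "(1 - c)/(1-R) - (1 - c*R)/(1-R) = -c"
proof -
  have "(1 - c)/(1-R) - (1 - c*R)/(1-R) = ((-c) * (1-R))/(1-R)"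
    by (simp add: diff_divide_distrib[symmetric] algebra_simps)
  then show ?thesis using assms by simp
qed

lemma hf_drift:
  assumes q: "0 < q" "q < 1" and b: "length b = N" "b \<noteq> replicate N True"
  shows "hf N (1 - 2*q) b - (\<Sum>v\<in>LL N. wt q v * hf N (1 - 2*q) (xorl b v)) = 1"
proof -
  let ?r = "1 - 2*q"
  let ?S = "LL N - {replicate N False}"
  have r: "\<bar>?r\<bar> < 1" using q by auto
  have nz: "1 - ?r ^ cnt s \<noteq> 0" if "s \<in> ?S" for s
    using that cnt_pos[of s N] pow_ne_1[OF r] by (auto simp: LL_def)
  have "(\<Sum>v\<in>LL N. wt q v * hf N ?r (xorl b v)) =
        (\<Sum>s\<in>?S. (\<Sum>v\<in>LL N. wt q v - wt q v * chi s (xorl b v)) / (1 - ?r ^ cnt s))"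
    unfolding hf_def sum_distrib_left
    by (subst sum.swap) (simp add: sum_divide_distrib algebra_simps)
  also have "\<dots> = (\<Sum>s\<in>?S. (1 - chi s b * ?r ^ cnt s) / (1 - ?r ^ cnt s))"
  proof (intro sum.cong refl)
    fix s assume "s \<in> ?S"
    then have ls: "length s = N" by (simp add: LL_def)
    show "(\<Sum>v\<in>LL N. wt q v - wt q v * chi s (xorl b v)) / (1 - ?r ^ cnt s) =
          (1 - chi s b * ?r ^ cnt s) / (1 - ?r ^ cnt s)"
      by (simp only: sum_subtractf sum_wt exp_chi[OF b(1) ls])
  qed
  finally have E: "(\<Sum>v\<in>LL N. wt q v * hf N ?r (xorl b v)) = \<dots>" .
  have "hf N ?r b - (\<Sum>s\<in>?S. (1 - chi s b * ?r ^ cnt s) / (1 - ?r ^ cnt s)) =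
        (\<Sum>s\<in>?S. - chi s b)"
    unfolding hf_def sum_subtractf[symmetric]
  proof (intro sum.cong refl)
    fix s assume "s \<in> ?S"
    then have "1 - ?r ^ cnt s \<noteq> 0" by (rule nz)
    then show "(1 - chi s b) / (1 - ?r ^ cnt s) - (1 - chi s b * ?r ^ cnt s) / (1 - ?r ^ cnt s) = - chi s b"
      by (rule frac_aux)
  qed
  also have "\<dots> = - ((\<Sum>s\<in>LL N. chi s b) - chi (replicate N False) b)"
  proof -
    have "replicate N False \<in> LL N" by (simp add: LL_def)
    then show ?thesis by (simp add: sum_negf sum_diff1)
  qed
  also have "\<dots> = 1" using sum_chi_s[OF b(1)] b(2) chi_False by simp
  finally show ?thesis using E by simp
qed

lemma sum_hf:
  assumes "\<bar>r\<bar> < 1"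
  shows "(\<Sum>b\<in>LL N. hf N r b) = 2 ^ N * (\<Sum>s\<in>LL N - {replicate N False}. 1 / (1 - r ^ cnt s))"
proof -
  have "(\<Sum>b\<in>LL N. hf N r b) = (\<Sum>s\<in>LL N - {replicate N False}. (\<Sum>b\<in>LL N. 1 - chi s b) / (1 - r ^ cnt s))"
    unfolding hf_def by (subst sum.swap) (simp add: sum_divide_distrib)
  also have "\<dots> = (\<Sum>s\<in>LL N - {replicate N False}. 2 ^ N / (1 - r ^ cnt s))"
  proof (intro sum.cong refl)
    fix s assume s: "s \<in> LL N - {replicate N False}"
    then have ls: "length s = N" by (simp add: LL_def)
    have "(\<Sum>b\<in>LL N. 1 - chi s b) = 2 ^ N"
      using s by (simp add: sum_subtractf sum_chi_b[OF ls])
    then show "(\<Sum>b\<in>LL N. 1 - chi s b) / (1 - r ^ cnt s) = 2 ^ N / (1 - r ^ cnt s)" by simp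
  qed
  finally show ?thesis by (simp add: sum_distrib_left)
qed

lemma sum_cnt_all: "(\<Sum>s\<in>LL N. g (cnt s)) = (\<Sum>j\<le>N. real (N choose j) * g j)"
proof (induction N arbitrary: g)
  case 0
  then show ?case by (simp add: LL_0 cnt_def)
next
  case (Suc N)
  have A: "(\<Sum>s\<in>LL (Suc N). g (cnt s)) = (\<Sum>j\<le>N. real (N choose j) * g (Suc j)) + (\<Sum>j\<le>N. real (N choose j) * g j)"
    unfolding LL_Suc_sum by (simp add: cnt_Cons Suc.IH[of "\<lambda>j. g (Suc j)"] Suc.IH[of g])
  have B: "(\<Sum>j\<le>N. real (N choose j) * g j) = g 0 + (\<Sum>j\<le>N. real (N choose Suc j) * g (Suc j))"
  proof -
    have "(\<Sum>j\<le>N. real (N choose j) * g j) = (\<Sum>j\<le>Suc N. real (N choose j) * g j)" by simp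
    also have "\<dots> = g 0 + (\<Sum>j\<le>N. real (N choose Suc j) * g (Suc j))"
      by (subst sum.atMost_Suc_shift) simp
    finally show ?thesis .
  qed
  have C: "(\<Sum>j\<le>Suc N. real (Suc N choose j) * g j) =
      g 0 + (\<Sum>j\<le>N. real (N choose j) * g (Suc j)) + (\<Sum>j\<le>N. real (N choose Suc j) * g (Suc j))"
    by (subst sum.atMost_Suc_shift) (simp add: algebra_simps sum.distrib)
  show ?case using A B C by simp
qed

lemma sum_cnt_nz: "(\<Sum>s\<in>LL N - {replicate N False}. g (cnt s)) = (\<Sum>j=1..N. real (N choose j) * g j)"
proof -
  have "(\<Sum>s\<in>LL N - {replicate N False}. g (cnt s)) = (\<Sum>s\<in>LL N. g (cnt s)) - g 0"
  proof -
    have "replicate N False \<in> LL N" by (simp add: LL_def)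
    moreover have "cnt (replicate N False) = 0" by (simp add: cnt_def)
    ultimately show ?thesis by (simp add: sum_diff1)
  qed
  also have "\<dots> = (\<Sum>j\<le>N. real (N choose j) * g j) - g 0" by (simp add: sum_cnt_all)
  also have "\<dots> = (\<Sum>j=1..N. real (N choose j) * g j)"
  proof -
    have "{..N} = insert 0 {1..N}" by auto
    then show ?thesis by simp
  qed
  finally show ?thesis .
qed

definition blk :: "nat \<Rightarrow> nat \<Rightarrow> bool list \<Rightarrow> bool list" where
  "blk l j x = take l (drop (j*l) x)"

definition AA :: "nat \<Rightarrow> (nat \<Rightarrow> real) \<Rightarrow> nat \<Rightarrow> real" where
  "AA l p j = 1 / (1 - p j) ^ (j*l)"

definition hj :: "nat \<Rightarrow> (nat \<Rightarrow> real) \<Rightarrow> nat \<Rightarrow> bool list \<Rightarrow> real" where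
  "hj l p j = hf l (1 - 2 * p j)"

definition GG :: "nat \<Rightarrow> nat \<Rightarrow> (nat \<Rightarrow> real) \<Rightarrow> bool list \<Rightarrow> real" where
  "GG n l p x = (\<Sum>j<n div l. AA l p j * hj l p j (blk l j x))"

definition Kr :: "nat \<Rightarrow> nat \<Rightarrow> (nat \<Rightarrow> real) \<Rightarrow> (bool list \<Rightarrow> real) \<Rightarrow> bool list \<Rightarrow> real" where
  "Kr n l p f x = (\<Sum>M\<in>LL n. pmf (flip_mask n (p (BLO l x))) M * f (stepM l x M))"

definition Qop :: "nat \<Rightarrow> nat \<Rightarrow> (nat \<Rightarrow> real) \<Rightarrow> (bool list \<Rightarrow> real) \<Rightarrow> bool list \<Rightarrow> real" where
  "Qop n l p f x = (if BLO l x = n div l then 0 else Kr n l p f x)"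

definition ee :: "nat \<Rightarrow> nat \<Rightarrow> (nat \<Rightarrow> real) \<Rightarrow> bool list \<Rightarrow> real" where
  "ee n l p x = (if BLO l x = n div l then GG n l p x else GG n l p x - 1 - Kr n l p (GG n l p) x)"

definition Inv :: "nat \<Rightarrow> nat \<Rightarrow> (bool list \<Rightarrow> real) \<Rightarrow> bool" where
  "Inv n l f \<longleftrightarrow> f (replicate n True) = 0 \<and>
     (\<forall>i<n div l. \<forall>b\<in>LL l. b \<noteq> replicate l True \<longrightarrow>
        (\<Sum>s\<in>LL (n - Suc i * l). f (replicate (i*l) True @ b @ s)) = 0)"

lemma blk_prefix:
  assumes "j < i" shows "blk l j (replicate (i*l) True @ z) = replicate l True"
proof -
  have le: "j*l \<le> i*l" using assms by simp
  have d: "(i-j)*l = i*l - j*l" by (rule diff_mult_distrib)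
  have e: "i*l = j*l + (i-j)*l" unfolding d using le by simp
  have "1 \<le> i - j" using assms by simp
  then have "1*l \<le> (i-j)*l" by (rule mult_le_mono1)
  then have l: "l \<le> (i-j)*l" by simp
  have "drop (j*l) (replicate (i*l) True @ z) = replicate ((i-j)*l) True @ z"
    by (subst e, simp only: replicate_add) simp
  then show ?thesis unfolding blk_def using l by (simp add: min_def)
qed

lemma blk_here:
  assumes "length c = l" shows "blk l i (replicate (i*l) True @ c @ s) = c"
  unfolding blk_def using assms by simp

lemma blk_suffix:
  assumes "length c = l" "i < j" shows "blk l j (replicate (i*l) True @ c @ s) = blk l (j - Suc i) s"
proof -
  have "j * l = (Suc i + (j - Suc i)) * l" using assms(2) by simp
  also have "\<dots> = i*l + l + (j - Suc i) * l" by (simp add: algebra_simps)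
  finally have "j * l = i*l + l + (j - Suc i) * l" .
  then show ?thesis unfolding blk_def using assms(1) by (simp add: add.assoc)
qed

lemma sum_wt_if0:
  "(\<Sum>u\<in>LL N. wt q u * (if u = replicate N False then X else Y)) =
     (1 - q) ^ N * X + (1 - (1 - q) ^ N) * Y"
proof -
  have m: "replicate N False \<in> LL N" by (simp add: LL_def)
  have w0: "wt q (replicate N False) = (1 - q) ^ N" by (simp add: wt_def)
  have "(\<Sum>u\<in>LL N. wt q u * (if u = replicate N False then X else Y)) =
        wt q (replicate N False) * X + (\<Sum>u\<in>LL N - {replicate N False}. wt q u * (if u = replicate N False then X else Y))"
    by (subst sum.remove[OF finite_LL m]) simp
  also have "(\<Sum>u\<in>LL N - {replicate N False}. wt q u * (if u = replicate N False then X else Y)) =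
      (\<Sum>u\<in>LL N - {replicate N False}. wt q u * Y)"
    by (rule sum.cong) auto
  also have "(\<Sum>u\<in>LL N - {replicate N False}. wt q u * Y) = (1 - (1 - q) ^ N) * Y"
    using m by (simp add: sum_distrib_right[symmetric] sum_diff1 sum_wt w0)
  finally show ?thesis using w0 by simp
qed

context ea
begin

lemma pq: "i < k \<Longrightarrow> 0 \<le> p i \<and> p i \<le> 1" using p01[of i] by auto

lemma pmf_flip_n: "i < k \<Longrightarrow> M \<in> LL n \<Longrightarrow> pmf (flip_mask n (p i)) M = wt (p i) M"
  using pmf_flip[of "p i" n M] pq[of i] by (simp add: LL_def)

lemma sum_split3:
  assumes "i < k"
  shows "(\<Sum>M\<in>LL n. F M) = (\<Sum>u\<in>LL (i*l). \<Sum>v\<in>LL l. \<Sum>t\<in>LL (n - Suc i * l). F (u @ v @ t))"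
proof -
  have "n = i*l + (l + (n - Suc i * l))" using len_class[OF assms] by simp
  then have "(\<Sum>M\<in>LL n. F M) = (\<Sum>M\<in>LL (i*l + (l + (n - Suc i * l))). F M)" by simp
  also have "\<dots> = (\<Sum>u\<in>LL (i*l). \<Sum>v\<in>LL l. \<Sum>t\<in>LL (n - Suc i * l). F (u @ v @ t))"
    by (simp add: sum_LL_append)
  finally show ?thesis .
qed

lemma Inv_Full:
  assumes "Inv n l f" "i \<le> k"
  shows "(\<Sum>s\<in>LL (n - i*l). f (replicate (i*l) True @ s)) = 0"
  using assms(2)
proof (induction rule: inc_induct)
  case base
  have "n - k*l = 0" using n_eq by simp
  then show ?case using assms(1) n_eq by (simp add: LL_0 Inv_def)
next
  case (step i)
  have e: "n - i*l = l + (n - Suc i * l)" using len_class[OF step(2)] by simp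
  have m: "replicate l True \<in> LL l" by (simp add: LL_def)
  have rr: "replicate (i*l) True @ replicate l True = replicate (Suc i * l) True"
    by (simp add: replicate_add[symmetric] add.commute)
  have "(\<Sum>s\<in>LL (n - i*l). f (replicate (i*l) True @ s)) =
        (\<Sum>b\<in>LL l. \<Sum>s\<in>LL (n - Suc i * l). f (replicate (i*l) True @ b @ s))"
    unfolding e sum_LL_append by simp
  also have "\<dots> = (\<Sum>s\<in>LL (n - Suc i * l). f (replicate (i*l) True @ replicate l True @ s)) +
        (\<Sum>b\<in>LL l - {replicate l True}. \<Sum>s\<in>LL (n - Suc i * l). f (replicate (i*l) True @ b @ s))"
    by (subst sum.remove[OF finite_LL m]) simp
  also have "(\<Sum>b\<in>LL l - {replicate l True}. \<Sum>s\<in>LL (n - Suc i * l). f (replicate (i*l) True @ b @ s)) = 0"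
    using assms(1) step(2) unfolding Inv_def by (intro sum.neutral) auto
  also have "(\<Sum>s\<in>LL (n - Suc i * l). f (replicate (i*l) True @ replicate l True @ s)) =
      (\<Sum>s\<in>LL (n - Suc i * l). f (replicate (Suc i * l) True @ s))"
    unfolding append_assoc[symmetric] rr ..
  finally show ?case using step.IH by simp
qed

lemma Q_Inv:
  assumes "Inv n l f" shows "Inv n l (Qop n l p f)"
  unfolding Inv_def
proof (intro conjI allI impI ballI)
  show "Qop n l p f (replicate n True) = 0" unfolding Qop_def using BLO_all by simp
next
  fix i b assume i: "i < k" and b: "b \<in> LL l" "b \<noteq> replicate l True"
  let ?x = "\<lambda>s. replicate (i*l) True @ b @ s"
  let ?R = "LL (n - Suc i * l)"
  have inner: "(\<Sum>s\<in>?R. f (stepM l (?x s) M)) = 0" if M: "M \<in> LL n" for M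
  proof -
    let ?u = "take (i*l) M" and ?v = "take l (drop (i*l) M)" and ?t = "drop (Suc i * l) M"
    show ?thesis
    proof (cases "?u = replicate (i*l) False")
      case True
      have t: "?t \<in> ?R" using M by (simp add: LL_def)
      have v: "xorl b ?v \<in> LL l" using b M len_class[OF i] by (simp add: LL_def)
      have "(\<Sum>s\<in>?R. f (stepM l (?x s) M)) =
            (\<Sum>s\<in>?R. (\<lambda>s. f (replicate (i*l) True @ xorl b ?v @ s)) (xorl s ?t))"
        using step_class[OF i b _ M] True by (intro sum.cong refl) auto
      also have "\<dots> = (\<Sum>s\<in>?R. f (replicate (i*l) True @ xorl b ?v @ s))"
        by (rule sum_xorl_shift[OF t])
      also have "\<dots> = 0"
      proof (cases "xorl b ?v = replicate l True")
        case True
        have rr: "replicate (i*l) True @ replicate l True = replicate (Suc i * l) True"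
          by (simp add: replicate_add[symmetric] add.commute)
        have "(\<Sum>s\<in>?R. f (replicate (i*l) True @ xorl b ?v @ s)) =
              (\<Sum>s\<in>?R. f (replicate (Suc i * l) True @ s))"
          unfolding True append_assoc[symmetric] rr ..
        then show ?thesis using Inv_Full[OF assms, of "Suc i"] i by simp
      next
        case False
        then show ?thesis using assms v i unfolding Inv_def by blast
      qed
      finally show ?thesis .
    next
      case False
      have "(\<Sum>s\<in>?R. f (stepM l (?x s) M)) = (\<Sum>s\<in>?R. f (?x s))"
        using step_class[OF i b _ M] False by (intro sum.cong refl) auto
      also have "\<dots> = 0" using assms i b unfolding Inv_def by blast
      finally show ?thesis .
    qed
  qed
  have "(\<Sum>s\<in>?R. Qop n l p f (?x s)) =
        (\<Sum>s\<in>?R. \<Sum>M\<in>LL n. pmf (flip_mask n (p i)) M * f (stepM l (?x s) M))"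
    using BLO_class[OF i b] i unfolding Qop_def Kr_def by (intro sum.cong refl) auto
  also have "\<dots> = (\<Sum>M\<in>LL n. pmf (flip_mask n (p i)) M * (\<Sum>s\<in>?R. f (stepM l (?x s) M)))"
    by (subst sum.swap) (simp add: sum_distrib_left)
  also have "\<dots> = 0" using inner by simp
  finally show "(\<Sum>s\<in>?R. Qop n l p f (?x s)) = 0" .
qed

end

context ea
begin

lemma blk_all: "j < k \<Longrightarrow> blk l j (replicate n True) = replicate l True"
  unfolding blk_def using len_class[of j] by (simp add: min_def)

lemma GG_all: "GG n l p (replicate n True) = 0"
  unfolding GG_def by (intro sum.neutral) (simp add: blk_all hj_def hf_True)

lemma q_i: "i < k \<Longrightarrow> 0 < p i \<and> p i < 1" using p01 by simp

lemma stepM_blk_lt: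
  assumes i: "i < k" and b: "b \<in> LL l" "b \<noteq> replicate l True" and s: "s \<in> LL (n - Suc i * l)"
    and M: "M \<in> LL n" and j: "j < i"
  shows "blk l j (stepM l (replicate (i*l) True @ b @ s) M) = replicate l True"
  using step_class[OF i b s M] blk_prefix[OF j] by simp

lemma drift_lt:
  assumes i: "i < k" and b: "b \<in> LL l" "b \<noteq> replicate l True" and j: "j < i"
  shows "(\<Sum>s\<in>LL (n - Suc i * l). hj l p j (blk l j (replicate (i*l) True @ b @ s)) -
     (\<Sum>M\<in>LL n. wt (p i) M * hj l p j (blk l j (stepM l (replicate (i*l) True @ b @ s) M)))) = 0"
proof -
  have "\<And>s. s \<in> LL (n - Suc i * l) \<Longrightarrow>
     (\<Sum>M\<in>LL n. wt (p i) M * hj l p j (blk l j (stepM l (replicate (i*l) True @ b @ s) M))) = 0"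
    using stepM_blk_lt[OF i b _ _ j] by (intro sum.neutral) (simp add: hj_def hf_True)
  then show ?thesis using blk_prefix[OF j] by (simp add: hj_def hf_True)
qed

lemma drift_gt:
  assumes i: "i < k" and b: "b \<in> LL l" "b \<noteq> replicate l True" and j: "i < j"
  shows "(\<Sum>s\<in>LL (n - Suc i * l). hj l p j (blk l j (replicate (i*l) True @ b @ s)) -
     (\<Sum>M\<in>LL n. wt (p i) M * hj l p j (blk l j (stepM l (replicate (i*l) True @ b @ s) M)))) = 0"
proof -
  let ?R = "LL (n - Suc i * l)"
  let ?h = "\<lambda>s. hj l p j (blk l (j - Suc i) s)"
  have lb: "length b = l" using b by (simp add: LL_def)
  have inner: "(\<Sum>s\<in>?R. hj l p j (blk l j (stepM l (replicate (i*l) True @ b @ s) M))) = (\<Sum>s\<in>?R. ?h s)"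
    if M: "M \<in> LL n" for M
  proof (cases "take (i*l) M = replicate (i*l) False")
    case True
    have t: "drop (Suc i * l) M \<in> ?R" using M by (simp add: LL_def)
    have lv: "length (xorl b (take l (drop (i*l) M))) = l" using lb M len_class[OF i] by (simp add: LL_def)
    have "(\<Sum>s\<in>?R. hj l p j (blk l j (stepM l (replicate (i*l) True @ b @ s) M))) =
          (\<Sum>s\<in>?R. ?h (xorl s (drop (Suc i * l) M)))"
      using step_class[OF i b _ M] True blk_suffix[OF lv j] by (intro sum.cong refl) simp
    also have "\<dots> = (\<Sum>s\<in>?R. ?h s)" by (rule sum_xorl_shift[OF t])
    finally show ?thesis .
  next
    case False
    show ?thesis
      using step_class[OF i b _ M] False blk_suffix[OF lb j] by (intro sum.cong refl) simp
  qed
  have "(\<Sum>s\<in>?R. (\<Sum>M\<in>LL n. wt (p i) M * hj l p j (blk l j (stepM l (replicate (i*l) True @ b @ s) M)))) =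
        (\<Sum>M\<in>LL n. wt (p i) M * (\<Sum>s\<in>?R. hj l p j (blk l j (stepM l (replicate (i*l) True @ b @ s) M))))"
    by (subst sum.swap) (simp add: sum_distrib_left)
  also have "\<dots> = (\<Sum>M\<in>LL n. wt (p i) M * (\<Sum>s\<in>?R. ?h s))"
    using inner by simp
  also have "\<dots> = (\<Sum>s\<in>?R. ?h s)" by (simp add: sum_distrib_right[symmetric] sum_wt)
  finally have X: "(\<Sum>s\<in>?R. (\<Sum>M\<in>LL n. wt (p i) M * hj l p j (blk l j (stepM l (replicate (i*l) True @ b @ s) M)))) =
        (\<Sum>s\<in>?R. ?h s)" .
  have Y: "(\<Sum>s\<in>?R. hj l p j (blk l j (replicate (i*l) True @ b @ s))) = (\<Sum>s\<in>?R. ?h s)"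
    using blk_suffix[OF lb j] by simp
  show ?thesis unfolding sum_subtractf X Y by simp
qed

lemma drift_eq:
  assumes i: "i < k" and b: "b \<in> LL l" "b \<noteq> replicate l True"
  shows "(\<Sum>s\<in>LL (n - Suc i * l). hj l p i (blk l i (replicate (i*l) True @ b @ s)) -
     (\<Sum>M\<in>LL n. wt (p i) M * hj l p i (blk l i (stepM l (replicate (i*l) True @ b @ s) M)))) =
     real (card (LL (n - Suc i * l))) * (1 - p i) ^ (i*l)"
proof -
  let ?q = "p i"
  let ?h = "hf l (1 - 2 * ?q)"
  let ?R = "LL (n - Suc i * l)"
  let ?X = "\<Sum>v\<in>LL l. wt ?q v * ?h (xorl b v)"
  have lb: "length b = l" using b by (simp add: LL_def)
  have one: "?h b - (\<Sum>M\<in>LL n. wt ?q M * ?h (blk l i (stepM l (replicate (i*l) True @ b @ s) M)))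
        = (1 - ?q) ^ (i*l)" if s: "s \<in> ?R" for s
  proof -
    have st: "blk l i (stepM l (replicate (i*l) True @ b @ s) M) =
        (if take (i*l) M = replicate (i*l) False then xorl b (take l (drop (i*l) M)) else b)"
      if M: "M \<in> LL n" for M
    proof -
      have lv: "length (xorl b (take l (drop (i*l) M))) = l" using lb M len_class[OF i] by (simp add: LL_def)
      show ?thesis using step_class[OF i b s M] blk_here[OF lv] blk_here[OF lb] by simp
    qed
    have "(\<Sum>M\<in>LL n. wt ?q M * ?h (blk l i (stepM l (replicate (i*l) True @ b @ s) M))) =
          (\<Sum>M\<in>LL n. wt ?q M * ?h (if take (i*l) M = replicate (i*l) False then xorl b (take l (drop (i*l) M)) else b))"
      using st by (intro sum.cong refl) simp
    also have "\<dots> = (\<Sum>u\<in>LL (i*l). \<Sum>v\<in>LL l. \<Sum>t\<in>?R.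
        wt ?q u * (wt ?q v * (wt ?q t * ?h (if u = replicate (i*l) False then xorl b v else b))))"
      by (subst sum_split3[OF i]) (intro sum.cong refl, simp add: LL_def wt_append)
    also have "\<dots> = (\<Sum>u\<in>LL (i*l). \<Sum>v\<in>LL l.
        wt ?q u * (wt ?q v * ?h (if u = replicate (i*l) False then xorl b v else b)))"
      by (simp add: sum_distrib_left[symmetric] sum_distrib_right[symmetric] sum_wt)
    also have "\<dots> = (\<Sum>u\<in>LL (i*l). wt ?q u * (if u = replicate (i*l) False then ?X else ?h b))"
      by (intro sum.cong refl) (auto simp: sum_distrib_left[symmetric] sum_distrib_right[symmetric] sum_wt)
    also have "\<dots> = (1 - ?q) ^ (i*l) * ?X + (1 - (1 - ?q) ^ (i*l)) * ?h b"
      by (rule sum_wt_if0)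
    finally have E: "(\<Sum>M\<in>LL n. wt ?q M * ?h (blk l i (stepM l (replicate (i*l) True @ b @ s) M))) =
       (1 - ?q) ^ (i*l) * ?X + (1 - (1 - ?q) ^ (i*l)) * ?h b" .
    have "?h b - ?X = 1" using hf_drift[of ?q b l] q_i[OF i] lb b(2) by simp
    then show ?thesis unfolding E by (simp add: algebra_simps)
  qed
  have "(\<Sum>s\<in>?R. hj l p i (blk l i (replicate (i*l) True @ b @ s)) -
     (\<Sum>M\<in>LL n. wt (p i) M * hj l p i (blk l i (stepM l (replicate (i*l) True @ b @ s) M)))) =
     (\<Sum>s\<in>?R. (1 - ?q) ^ (i*l))"
    using one blk_here[OF lb] unfolding hj_def by (intro sum.cong refl) simp
  then show ?thesis by simp
qed

end

context ea
begin

lemma e_Inv: "Inv n l (ee n l p)"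
  unfolding Inv_def
proof (intro conjI allI impI ballI)
  show "ee n l p (replicate n True) = 0" unfolding ee_def using BLO_all GG_all by simp
next
  fix i b assume i: "i < k" and b: "b \<in> LL l" "b \<noteq> replicate l True"
  let ?x = "\<lambda>s. replicate (i*l) True @ b @ s"
  let ?R = "LL (n - Suc i * l)"
  define D where "D = (\<lambda>j s. hj l p j (blk l j (?x s)) - (\<Sum>M\<in>LL n. wt (p i) M * hj l p j (blk l j (stepM l (?x s) M))))"
  have GK: "GG n l p (?x s) - Kr n l p (GG n l p) (?x s) = (\<Sum>j<k. AA l p j * D j s)" if s: "s \<in> ?R" for s
  proof -
    have "Kr n l p (GG n l p) (?x s) = (\<Sum>M\<in>LL n. wt (p i) M * GG n l p (stepM l (?x s) M))"
      unfolding Kr_def BLO_class[OF i b s] using pmf_flip_n[OF i] by (intro sum.cong refl) simp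
    also have "\<dots> = (\<Sum>j<k. AA l p j * (\<Sum>M\<in>LL n. wt (p i) M * hj l p j (blk l j (stepM l (?x s) M))))"
      unfolding GG_def sum_distrib_left by (subst sum.swap) (simp add: algebra_simps)
    finally show ?thesis unfolding GG_def D_def by (simp add: sum_subtractf right_diff_distrib)
  qed
  have DS: "(\<Sum>s\<in>?R. D j s) = (if j = i then real (card ?R) * (1 - p i) ^ (i*l) else 0)" for j
  proof (cases "j < i")
    case True
    then show ?thesis using drift_lt[OF i b True] unfolding D_def by simp
  next
    case False
    show ?thesis
    proof (cases "j = i")
      case True
      then show ?thesis using drift_eq[OF i b] unfolding D_def by simp
    next
      case False2: False
      then have "i < j" using False by simp
      then show ?thesis using drift_gt[OF i b] False2 unfolding D_def by simp
    qed
  qed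
  have AAi: "AA l p i * (1 - p i) ^ (i*l) = 1"
    using q_i[OF i] unfolding AA_def by simp
  have "(\<Sum>s\<in>?R. ee n l p (?x s)) = (\<Sum>s\<in>?R. (\<Sum>j<k. AA l p j * D j s) - 1)"
    unfolding ee_def using BLO_class[OF i b] i GK by (intro sum.cong refl) auto
  also have "\<dots> = (\<Sum>j<k. AA l p j * (\<Sum>s\<in>?R. D j s)) - real (card ?R)"
  proof -
    have "(\<Sum>s\<in>?R. (\<Sum>j<k. AA l p j * D j s) - 1) = (\<Sum>s\<in>?R. \<Sum>j<k. AA l p j * D j s) - real (card ?R)"
      by (simp only: sum_subtractf) simp
    also have "(\<Sum>s\<in>?R. \<Sum>j<k. AA l p j * D j s) = (\<Sum>j<k. AA l p j * (\<Sum>s\<in>?R. D j s))"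
      by (subst sum.swap) (simp only: sum_distrib_left)
    finally show ?thesis .
  qed
  also have "\<dots> = AA l p i * (real (card ?R) * (1 - p i) ^ (i*l)) - real (card ?R)"
    unfolding DS using i by (simp add: if_distrib sum.delta)
  also have "\<dots> = 0" using AAi by (simp add: algebra_simps)
  finally show "(\<Sum>s\<in>?R. ee n l p (?x s)) = 0" .
qed

end

fun vR :: "nat \<Rightarrow> nat \<Rightarrow> (nat \<Rightarrow> real) \<Rightarrow> nat \<Rightarrow> bool list \<Rightarrow> real" where
  "vR n l p 0 x = 0"
| "vR n l p (Suc N) x = (if BLO l x = n div l then 0 else 1 + Kr n l p (vR n l p N) x)"

fun dd :: "nat \<Rightarrow> nat \<Rightarrow> (nat \<Rightarrow> real) \<Rightarrow> nat \<Rightarrow> bool list \<Rightarrow> real" where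
  "dd n l p 0 x = 0"
| "dd n l p (Suc N) x = ee n l p x + Qop n l p (dd n l p N) x"

lemma Kr_add: "Kr n l p (\<lambda>y. f y + g y) x = Kr n l p f x + Kr n l p g x"
  unfolding Kr_def by (simp add: sum.distrib algebra_simps)

lemma Kr_diff: "Kr n l p (\<lambda>y. f y - g y) x = Kr n l p f x - Kr n l p g x"
  unfolding Kr_def by (simp add: sum_subtractf algebra_simps)

lemma Kr_mono: "(\<And>y. f y \<le> g y) \<Longrightarrow> Kr n l p f x \<le> Kr n l p g x"
  unfolding Kr_def by (intro sum_mono mult_left_mono) auto

lemma Kr_0: "Kr n l p (\<lambda>y. 0) x = 0" unfolding Kr_def by simp

lemma Qop_add: "Qop n l p (\<lambda>y. f y + g y) x = Qop n l p f x + Qop n l p g x"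
  unfolding Qop_def by (simp add: Kr_add)

lemma vR_mono: "vR n l p N x \<le> vR n l p (Suc N) x"
proof (induction N arbitrary: x)
  case 0
  have z: "vR n l p 0 = (\<lambda>y. 0)" by (rule ext) simp
  show ?case by (simp add: z Kr_0)
next
  case (Suc N)
  then show ?case using Kr_mono[of "vR n l p N" "vR n l p (Suc N)" n l p x]
    by (simp del: vR.simps(2)) (simp only: vR.simps(2), auto)
qed

lemma vR_nonneg: "0 \<le> vR n l p N x"
proof (induction N arbitrary: x)
  case (Suc N)
  then show ?case using Suc.IH[of x] vR_mono[of n l p N x] by linarith
qed simp

lemma Inv_add: "Inv n l f \<Longrightarrow> Inv n l g \<Longrightarrow> Inv n l (\<lambda>x. f x + g x)"
  unfolding Inv_def by (simp add: sum.distrib)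

lemma Inv_0: "Inv n l (\<lambda>x. 0)" unfolding Inv_def by simp

lemma xorl_not: "xorl x (map Not x) = replicate (length x) True"
  unfolding xorl_def by (induction x) auto

lemma wt_lb: "0 \<le> c \<Longrightarrow> c \<le> q \<Longrightarrow> c \<le> 1 - q \<Longrightarrow> c ^ length M \<le> wt q M"
proof (induction M)
  case (Cons a M)
  have "c * c ^ length M \<le> (if a then q else 1 - q) * wt q M"
    using Cons by (intro mult_mono) (auto intro: order_trans[OF Cons.prems(1)])
  then show ?case by (simp add: wt_def)
qed (simp add: wt_def)

context ea
begin

lemma dd_Inv: "Inv n l (dd n l p N)"
proof (induction N)
  case 0
  then show ?case using Inv_0 by (simp add: fun_eq_iff)
next
  case (Suc N)
  have "dd n l p (Suc N) = (\<lambda>x. ee n l p x + Qop n l p (dd n l p N) x)" by (simp add: fun_eq_iff)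
  then show ?case using Inv_add[OF e_Inv Q_Inv[OF Suc]] by simp
qed

lemma sum_dd: "(\<Sum>x\<in>LL n. dd n l p N x) = 0"
  using Inv_Full[OF dd_Inv, of 0] by simp

lemma W_eq: "GG n l p x - vR n l p N x = dd n l p N x + (Qop n l p ^^ N) (GG n l p) x"
proof (induction N arbitrary: x)
  case 0
  then show ?case by simp
next
  case (Suc N)
  have ih: "(\<lambda>y. GG n l p y - vR n l p N y) = (\<lambda>y. dd n l p N y + (Qop n l p ^^ N) (GG n l p) y)"
    using Suc by (simp add: fun_eq_iff)
  show ?case
  proof (cases "BLO l x = k")
    case True
    then show ?thesis by (simp add: ee_def Qop_def)
  next
    case False
    have "GG n l p x - vR n l p (Suc N) x = (GG n l p x - 1 - Kr n l p (GG n l p) x) +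
           Kr n l p (\<lambda>y. GG n l p y - vR n l p N y) x"
      using False by (simp add: Kr_diff)
    also have "\<dots> = ee n l p x + Qop n l p (dd n l p N) x + Qop n l p ((Qop n l p ^^ N) (GG n l p)) x"
      unfolding ih Kr_add using False by (simp add: ee_def Qop_def)
    finally show ?thesis by simp
  qed
qed

lemma sum_vR: "(\<Sum>x\<in>LL n. vR n l p N x) = (\<Sum>x\<in>LL n. GG n l p x) - (\<Sum>x\<in>LL n. (Qop n l p ^^ N) (GG n l p) x)"
proof -
  have "(\<Sum>x\<in>LL n. GG n l p x) - (\<Sum>x\<in>LL n. vR n l p N x) =
        (\<Sum>x\<in>LL n. dd n l p N x) + (\<Sum>x\<in>LL n. (Qop n l p ^^ N) (GG n l p) x)"
    by (simp add: sum_subtractf[symmetric] sum.distrib[symmetric] W_eq)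
  then show ?thesis using sum_dd by simp
qed

definition cmin where "cmin = Min ((\<lambda>m. min (p m) (1 - p m)) ` {..<k})"

lemma cmin_props: "0 < cmin" "\<And>m. m < k \<Longrightarrow> cmin \<le> p m \<and> cmin \<le> 1 - p m"
proof -
  have ne: "(\<lambda>m. min (p m) (1 - p m)) ` {..<k} \<noteq> {}" using k_pos by auto
  show "0 < cmin" unfolding cmin_def using ne p01 by (subst Min_gr_iff) auto
  fix m assume "m < k"
  then have "cmin \<le> min (p m) (1 - p m)" unfolding cmin_def by (intro Min_le) auto
  then show "cmin \<le> p m \<and> cmin \<le> 1 - p m" by simp
qed

definition "delta = cmin ^ n"

lemma delta: "0 < delta" "delta \<le> 1"
proof -
  show "0 < delta" unfolding delta_def using cmin_props(1) by simp
  have "cmin \<le> p 0" using cmin_props(2) k_pos by blast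
  then have "cmin \<le> 1" using q_i[of 0] k_pos by simp
  then show "delta \<le> 1" unfolding delta_def using cmin_props(1) by (simp add: power_le_one)
qed

lemma Q_contract:
  assumes x: "x \<in> LL n" and B: "\<And>y. y \<in> LL n \<Longrightarrow> \<bar>f y\<bar> \<le> B" and f0: "f (replicate n True) = 0"
  shows "\<bar>Qop n l p f x\<bar> \<le> (1 - delta) * B"
proof (cases "BLO l x = k")
  case True
  have "0 \<le> B" using B[of "replicate n True"] by (simp add: LL_def)
  then show ?thesis using True delta by (simp add: Qop_def)
next
  case False
  let ?m = "BLO l x"
  have lx: "length x = k * l" using x n_eq by (simp add: LL_def)
  have m: "?m < k" using BLO_le[OF l_pos lx] False by simp
  let ?q = "p ?m"
  let ?S = "map Not x"
  have S: "?S \<in> LL n" using x by (simp add: LL_def)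
  have stS: "stepM l x ?S = replicate n True"
  proof -
    have "xorl x ?S = replicate n True" using xorl_not[of x] x by (simp add: LL_def)
    then show ?thesis unfolding stepM_def Let_def using BLO_all m by simp
  qed
  have "Qop n l p f x = Kr n l p f x" using False by (simp add: Qop_def)
  also have "\<dots> = (\<Sum>M\<in>LL n. wt ?q M * f (stepM l x M))"
    unfolding Kr_def by (rule sum.cong[OF refl]) (simp add: pmf_flip_n[OF m])
  also have "\<dots> = wt ?q ?S * f (stepM l x ?S) + (\<Sum>M\<in>LL n - {?S}. wt ?q M * f (stepM l x M))"
    by (rule sum.remove[OF finite_LL S])
  also have "\<dots> = (\<Sum>M\<in>LL n - {?S}. wt ?q M * f (stepM l x M))" using stS f0 by simp
  finally have eq: "Qop n l p f x = (\<Sum>M\<in>LL n - {?S}. wt ?q M * f (stepM l x M))" .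
  have wq: "0 \<le> wt ?q M" for M using wt_nonneg pq[OF m] by auto
  have "\<bar>\<Sum>M\<in>LL n - {?S}. wt ?q M * f (stepM l x M)\<bar> \<le> (\<Sum>M\<in>LL n - {?S}. \<bar>wt ?q M * f (stepM l x M)\<bar>)"
    by (rule sum_abs)
  also have "\<dots> \<le> (\<Sum>M\<in>LL n - {?S}. wt ?q M * B)"
  proof (intro sum_mono)
    fix M assume "M \<in> LL n - {?S}"
    then have "stepM l x M \<in> LL n" using stepM_LL[OF x] by auto
    then have "\<bar>f (stepM l x M)\<bar> \<le> B" by (rule B)
    then show "\<bar>wt ?q M * f (stepM l x M)\<bar> \<le> wt ?q M * B"
      using wq[of M] by (simp add: abs_mult mult_left_mono)
  qed
  also have "\<dots> = (1 - wt ?q ?S) * B"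
    using S by (simp add: sum_distrib_right[symmetric] sum_diff1 sum_wt)
  also have "\<dots> \<le> (1 - delta) * B"
  proof (rule mult_right_mono)
    have "delta \<le> wt ?q ?S" unfolding delta_def
      using wt_lb[of cmin ?q ?S] cmin_props(2)[OF m] cmin_props(1) m S by (simp add: LL_def less_imp_le)
    then show "1 - wt ?q ?S \<le> 1 - delta" by simp
    show "0 \<le> B" using B[of "replicate n True"] by (simp add: LL_def)
  qed
  finally show ?thesis using eq by simp
qed

definition "B0 = (\<Sum>y\<in>LL n. \<bar>GG n l p y\<bar>)"

lemma Qpow_bound: "(\<forall>x\<in>LL n. \<bar>(Qop n l p ^^ N) (GG n l p) x\<bar> \<le> (1 - delta) ^ N * B0) \<and>
    (Qop n l p ^^ N) (GG n l p) (replicate n True) = 0"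
proof (induction N)
  case 0
  have "\<bar>GG n l p x\<bar> \<le> B0" if "x \<in> LL n" for x
    unfolding B0_def using that by (intro member_le_sum) simp_all
  then show ?case using GG_all by simp
next
  case (Suc N)
  have "\<bar>Qop n l p ((Qop n l p ^^ N) (GG n l p)) x\<bar> \<le> (1 - delta) * ((1 - delta) ^ N * B0)"
    if "x \<in> LL n" for x
    using Q_contract[OF that, of _ "(1 - delta) ^ N * B0"] Suc by blast
  moreover have "Qop n l p ((Qop n l p ^^ N) (GG n l p)) (replicate n True) = 0"
    unfolding Qop_def using BLO_all by simp
  ultimately show ?case by (simp add: mult.assoc)
qed

lemma sum_vR_lim: "(\<lambda>N. \<Sum>x\<in>LL n. vR n l p N x) \<longlonglongrightarrow> (\<Sum>x\<in>LL n. GG n l p x)"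
proof -
  let ?E = "\<lambda>N. \<Sum>x\<in>LL n. (Qop n l p ^^ N) (GG n l p) x"
  have bnd: "\<bar>?E N\<bar> \<le> 2 ^ n * B0 * (1 - delta) ^ N" for N
  proof -
    have "\<bar>?E N\<bar> \<le> (\<Sum>x\<in>LL n. \<bar>(Qop n l p ^^ N) (GG n l p) x\<bar>)" by (rule sum_abs)
    also have "\<dots> \<le> (\<Sum>x\<in>LL n. (1 - delta) ^ N * B0)"
      using Qpow_bound[of N] by (intro sum_mono) auto
    finally show ?thesis by (simp add: algebra_simps)
  qed
  have "(\<lambda>N. 2 ^ n * B0 * (1 - delta) ^ N) \<longlonglongrightarrow> 2 ^ n * B0 * 0"
    using delta by (intro tendsto_mult tendsto_const LIMSEQ_power_zero) auto
  then have g0: "(\<lambda>N. 2 ^ n * B0 * (1 - delta) ^ N) \<longlonglongrightarrow> 0" by simp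
  have ev: "\<forall>\<^sub>F N in sequentially. norm (?E N) \<le> 2 ^ n * B0 * (1 - delta) ^ N"
    using bnd by (intro always_eventually allI) simp
  have "?E \<longlonglongrightarrow> 0" by (rule Lim_null_comparison[OF ev g0])
  then have "(\<lambda>N. (\<Sum>x\<in>LL n. GG n l p x) - ?E N) \<longlonglongrightarrow> (\<Sum>x\<in>LL n. GG n l p x) - 0"
    by (intro tendsto_diff tendsto_const)
  then show ?thesis unfolding sum_vR by simp
qed

end

context ea
begin

lemma sum_blk:
  fixes F :: "bool list \<Rightarrow> real"
  assumes j: "j < k"
  shows "(\<Sum>x\<in>LL n. F (blk l j x)) * 2 ^ l = 2 ^ n * (\<Sum>c\<in>LL l. F c)"
proof -
  have "(\<Sum>x\<in>LL n. F (blk l j x)) = (\<Sum>u\<in>LL (j*l). \<Sum>v\<in>LL l. \<Sum>t\<in>LL (n - Suc j * l). F (blk l j (u @ v @ t)))"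
    by (rule sum_split3[OF j])
  also have "\<dots> = (\<Sum>u\<in>LL (j*l). \<Sum>v\<in>LL l. \<Sum>t\<in>LL (n - Suc j * l). F v)"
    by (intro sum.cong refl) (simp add: blk_def LL_def)
  also have "\<dots> = (\<Sum>u\<in>LL (j*l). \<Sum>v\<in>LL l. 2 ^ (n - Suc j * l) * F v)"
    by (intro sum.cong refl) simp
  also have "\<dots> = (\<Sum>u\<in>LL (j*l). 2 ^ (n - Suc j * l) * (\<Sum>c\<in>LL l. F c))"
    by (simp only: sum_distrib_left)
  also have "\<dots> = 2 ^ (j*l) * 2 ^ (n - Suc j * l) * (\<Sum>c\<in>LL l. F c)"
    by simp
  finally have "(\<Sum>x\<in>LL n. F (blk l j x)) * 2 ^ l = 2 ^ (j*l + (n - Suc j * l) + l) * (\<Sum>c\<in>LL l. F c)"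
    by (simp add: power_add)
  also have "j*l + (n - Suc j * l) + l = n" using len_class[OF j] by simp
  finally show ?thesis .
qed

lemma sum_GG: "(\<Sum>x\<in>LL n. GG n l p x) / 2 ^ n =
    (\<Sum>m<k. 1 / (1 - p m) ^ (m * l) * (\<Sum>j = 1..l. real (l choose j) * (1 / (1 - (1 - 2 * p m) ^ j))))"
proof -
  have "(\<Sum>x\<in>LL n. GG n l p x) = (\<Sum>m<k. AA l p m * (\<Sum>x\<in>LL n. hj l p m (blk l m x)))"
    unfolding GG_def by (subst sum.swap) (simp add: sum_distrib_left)
  also have "\<dots> = (\<Sum>m<k. AA l p m * (2 ^ n * (\<Sum>j = 1..l. real (l choose j) * (1 / (1 - (1 - 2 * p m) ^ j)))))"
  proof (intro sum.cong refl arg_cong2[where f="(*)"])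
    fix m assume m: "m \<in> {..<k}"
    have r: "\<bar>1 - 2 * p m\<bar> < 1" using q_i[of m] m by auto
    have "(\<Sum>x\<in>LL n. hj l p m (blk l m x)) * 2 ^ l = 2 ^ n * (\<Sum>c\<in>LL l. hj l p m c)"
      using sum_blk[of m] m by simp
    also have "(\<Sum>c\<in>LL l. hj l p m c) = 2 ^ l * (\<Sum>j = 1..l. real (l choose j) * (1 / (1 - (1 - 2 * p m) ^ j)))"
      unfolding hj_def sum_hf[OF r] sum_cnt_nz[of "\<lambda>c. 1 / (1 - (1 - 2 * p m) ^ c)" l] ..
    finally show "(\<Sum>x\<in>LL n. hj l p m (blk l m x)) = 2 ^ n * (\<Sum>j = 1..l. real (l choose j) * (1 / (1 - (1 - 2 * p m) ^ j)))"
      by simp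
  qed
  finally have S: "(\<Sum>x\<in>LL n. GG n l p x) = (\<Sum>m<k. AA l p m * (2 ^ n * (\<Sum>j = 1..l. real (l choose j) * (1 / (1 - (1 - 2 * p m) ^ j)))))" .
  have aux: "\<And>a c x :: real. c \<noteq> 0 \<Longrightarrow> a * (c * x) / c = a * x" by simp
  show ?thesis unfolding S sum_divide_distrib AA_def
    by (intro sum.cong refl aux) simp
qed

end

fun TN :: "nat \<Rightarrow> nat \<Rightarrow> nat \<Rightarrow> bool list \<Rightarrow> (nat \<Rightarrow> bool list) stream \<Rightarrow> ennreal" where
  "TN n l 0 x \<omega> = 0"
| "TN n l (Suc N) x \<omega> = (if BLO l x = n div l then 0 else 1 + TN n l N (ea_step l x (shd \<omega>)) (stl \<omega>))"

lemma ea_run_shift: "ea_run l x (r ## \<omega>) (Suc t) = ea_run l (ea_step l x r) \<omega> t"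
  by (induction t) auto

lemma runtime_rec:
  "ea_runtime n l (x, \<omega>) = (if BLO l x = n div l then 0 else eSuc (ea_runtime n l (ea_step l x (shd \<omega>), stl \<omega>)))"
proof -
  let ?P = "\<lambda>t. BLO l (ea_run l x \<omega> t) = n div l"
  let ?P' = "\<lambda>t. BLO l (ea_run l (ea_step l x (shd \<omega>)) (stl \<omega>) t) = n div l"
  have sh: "ea_run l x \<omega> (Suc t) = ea_run l (ea_step l x (shd \<omega>)) (stl \<omega>) t" for t
    using ea_run_shift[of l x "shd \<omega>" "stl \<omega>" t] by simp
  show ?thesis
  proof (cases "BLO l x = n div l")
    case True
    then have "?P 0" by simp
    then have "(LEAST t. ?P t) = 0" by (rule Least_eq_0)
    moreover have "\<exists>t. ?P t" using \<open>?P 0\<close> by blast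
    ultimately show ?thesis using True unfolding ea_runtime_def by (simp add: zero_enat_def)
  next
    case False
    then have n0: "\<not> ?P 0" by simp
    have ex: "(\<exists>t. ?P t) \<longleftrightarrow> (\<exists>t. ?P' t)"
    proof
      assume "\<exists>t. ?P t"
      then obtain t where "?P t" by blast
      then show "\<exists>t. ?P' t" using n0 sh by (cases t) auto
    next
      assume "\<exists>t. ?P' t"
      then show "\<exists>t. ?P t" using sh by metis
    qed
    show ?thesis
    proof (cases "\<exists>t. ?P' t")
      case True
      then obtain t where t: "?P' t" by blast
      have "(LEAST t. ?P t) = Suc (LEAST t. ?P' t)"
      proof (rule Least_Suc2[where P="?P" and Q="?P'"])
        show "?P (Suc t)" using sh t by simp
        show "?P' t" by (rule t)
        show "\<not> ?P 0" by (rule n0)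
        show "\<forall>k. ?P (Suc k) = ?P' k" using sh by simp
      qed
      then show ?thesis using True ex False unfolding ea_runtime_def by (simp add: eSuc_enat)
    next
      case False2: False
      then show ?thesis using ex False unfolding ea_runtime_def by simp
    qed
  qed
qed

lemma TN_eq: "TN n l N x \<omega> = ennreal_of_enat (min (ea_runtime n l (x, \<omega>)) (enat N))"
proof (induction N arbitrary: x \<omega>)
  case 0
  then show ?case by (simp add: zero_enat_def[symmetric])
next
  case (Suc N)
  show ?case
  proof (cases "BLO l x = n div l")
    case True
    then show ?thesis by (subst runtime_rec) simp
  next
    case False
    have "min (eSuc (ea_runtime n l (ea_step l x (shd \<omega>), stl \<omega>))) (enat (Suc N)) =
          eSuc (min (ea_runtime n l (ea_step l x (shd \<omega>), stl \<omega>)) (enat N))"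
      by (simp add: eSuc_enat[symmetric] min_def)
    then show ?thesis using False Suc.IH by (subst runtime_rec) simp
  qed
qed

lemma TN_mono: "TN n l N x \<omega> \<le> TN n l (Suc N) x \<omega>"
  unfolding TN_eq by (intro ennreal_of_enat_le_iff[THEN iffD2] min.mono) auto

lemma TN_sup: "(SUP N. TN n l N x \<omega>) = ennreal_of_enat (ea_runtime n l (x, \<omega>))"
proof (cases "ea_runtime n l (x, \<omega>)")
  case (enat t)
  show ?thesis
  proof (rule antisym)
    show "(SUP N. TN n l N x \<omega>) \<le> ennreal_of_enat (ea_runtime n l (x, \<omega>))"
      unfolding TN_eq by (intro SUP_least ennreal_of_enat_le_iff[THEN iffD2]) simp
    have "TN n l t x \<omega> = ennreal_of_enat (ea_runtime n l (x, \<omega>))" unfolding TN_eq enat by simp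
    then show "ennreal_of_enat (ea_runtime n l (x, \<omega>)) \<le> (SUP N. TN n l N x \<omega>)"
      by (metis SUP_upper UNIV_I)
  qed
next
  case infinity
  have "(SUP N. TN n l N x \<omega>) = (SUP N. of_nat N)" unfolding TN_eq infinity by simp
  also have "\<dots> = \<top>" by (rule ennreal_SUP_of_nat_eq_top)
  finally show ?thesis using infinity by simp
qed

lemma TN_meas: "TN n l N x \<in> borel_measurable (stream_space (measure_pmf R))"
proof (induction N arbitrary: x)
  case 0
  then show ?case by simp
next
  case (Suc N)
  have g: "(\<lambda>\<omega>. ea_step l x (shd \<omega>)) \<in> measurable (stream_space (measure_pmf R)) (count_space UNIV)"
    using measurable_shd[of "measure_pmf R"] by (rule measurable_compose) simp
  have f: "(\<lambda>\<omega>. TN n l N y (stl \<omega>)) \<in> borel_measurable (stream_space (measure_pmf R))" for y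
    using measurable_stl Suc.IH by (rule measurable_compose)
  have "(\<lambda>\<omega>. TN n l N (ea_step l x (shd \<omega>)) (stl \<omega>)) \<in> borel_measurable (stream_space (measure_pmf R))"
    using measurable_compose_countable[OF f g] .
  then show ?case by simp
qed

context ea
begin

abbreviation "SS \<equiv> stream_space (measure_pmf (step_rand n l p))"

definition VV :: "nat \<Rightarrow> bool list \<Rightarrow> ennreal" where
  "VV N x = (\<integral>\<^sup>+\<omega>. TN n l N x \<omega> \<partial>SS)"

lemma SS_prob: "prob_space SS"
  by (rule prob_space.prob_space_stream_space) (rule prob_space_measure_pmf)

lemma VV_Suc: "VV (Suc N) x = (if BLO l x = k then 0 else 1 + (\<integral>\<^sup>+r. VV N (ea_step l x r) \<partial>measure_pmf (step_rand n l p)))"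
proof -
  have "VV (Suc N) x = (\<integral>\<^sup>+r. (\<integral>\<^sup>+\<omega>. TN n l (Suc N) x (r ## \<omega>) \<partial>SS) \<partial>measure_pmf (step_rand n l p))"
    unfolding VV_def by (rule prob_space.nn_integral_stream_space[OF prob_space_measure_pmf TN_meas])
  also have "\<dots> = (if BLO l x = k then 0 else 1 + (\<integral>\<^sup>+r. VV N (ea_step l x r) \<partial>measure_pmf (step_rand n l p)))"
  proof (cases "BLO l x = k")
    case True
    then show ?thesis by simp
  next
    case False
    have "(\<integral>\<^sup>+\<omega>. TN n l (Suc N) x (r ## \<omega>) \<partial>SS) = 1 + VV N (ea_step l x r)" for r
    proof -
      have "(\<integral>\<^sup>+\<omega>. TN n l (Suc N) x (r ## \<omega>) \<partial>SS) = (\<integral>\<^sup>+\<omega>. 1 + TN n l N (ea_step l x r) \<omega> \<partial>SS)"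
        using False by simp
      also have "\<dots> = (\<integral>\<^sup>+\<omega>. 1 \<partial>SS) + VV N (ea_step l x r)"
        unfolding VV_def by (rule nn_integral_add) (simp_all add: TN_meas)
      also have "(\<integral>\<^sup>+\<omega>. 1 \<partial>SS) = 1" using prob_space.emeasure_space_1[OF SS_prob] by simp
      finally show ?thesis .
    qed
    then have "(\<integral>\<^sup>+r. (\<integral>\<^sup>+\<omega>. TN n l (Suc N) x (r ## \<omega>) \<partial>SS) \<partial>measure_pmf (step_rand n l p)) =
        (\<integral>\<^sup>+r. 1 + VV N (ea_step l x r) \<partial>measure_pmf (step_rand n l p))" by simp
    also have "\<dots> = (\<integral>\<^sup>+r. 1 \<partial>measure_pmf (step_rand n l p)) + (\<integral>\<^sup>+r. VV N (ea_step l x r) \<partial>measure_pmf (step_rand n l p))"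
      by (rule nn_integral_add) simp_all
    finally show ?thesis using False by simp
  qed
  finally show ?thesis .
qed

lemma step_rand_comp: "m < k \<Longrightarrow> map_pmf (\<lambda>r. r m) (step_rand n l p) = flip_mask n (p m)"
  unfolding step_rand_def by (subst Pi_pmf_component) auto

lemma VV_vR: "x \<in> LL n \<Longrightarrow> VV N x = ennreal (vR n l p N x)"
proof (induction N arbitrary: x)
  case 0
  then show ?case by (simp add: VV_def)
next
  case (Suc N)
  show ?case
  proof (cases "BLO l x = k")
    case True
    then show ?thesis by (simp add: VV_Suc)
  next
    case False
    let ?m = "BLO l x"
    have lx: "length x = k * l" using Suc.prems n_eq by (simp add: LL_def)
    have m: "?m < k" using BLO_le[OF l_pos lx] False by simp
    have "(\<integral>\<^sup>+r. VV N (ea_step l x r) \<partial>measure_pmf (step_rand n l p)) =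
          (\<integral>\<^sup>+r. VV N (stepM l x (r ?m)) \<partial>measure_pmf (step_rand n l p))"
      by (simp add: ea_step_eq)
    also have "\<dots> = (\<integral>\<^sup>+M. VV N (stepM l x M) \<partial>measure_pmf (map_pmf (\<lambda>r. r ?m) (step_rand n l p)))"
      by (simp add: nn_integral_map_pmf)
    also have "\<dots> = (\<integral>\<^sup>+M. VV N (stepM l x M) \<partial>measure_pmf (flip_mask n (p ?m)))"
      by (simp add: step_rand_comp[OF m])
    also have "\<dots> = (\<Sum>M\<in>LL n. VV N (stepM l x M) * pmf (flip_mask n (p ?m)) M)"
      by (rule nn_integral_measure_pmf_support) (auto dest: set_flip[OF pq[OF m, THEN conjunct1] pq[OF m, THEN conjunct2]])
    also have "\<dots> = (\<Sum>M\<in>LL n. ennreal (pmf (flip_mask n (p ?m)) M * vR n l p N (stepM l x M)))"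
      using Suc.IH stepM_LL[OF Suc.prems] by (intro sum.cong refl) (simp add: ennreal_mult[symmetric] vR_nonneg mult.commute)
    also have "\<dots> = ennreal (Kr n l p (vR n l p N) x)"
      unfolding Kr_def by (rule sum_ennreal) (simp add: vR_nonneg)
    finally have I: "(\<integral>\<^sup>+r. VV N (ea_step l x r) \<partial>measure_pmf (step_rand n l p)) = ennreal (Kr n l p (vR n l p N) x)" .
    have K0: "0 \<le> Kr n l p (vR n l p N) x" unfolding Kr_def by (intro sum_nonneg) (simp add: vR_nonneg)
    have "ennreal (1 + Kr n l p (vR n l p N) x) = ennreal 1 + ennreal (Kr n l p (vR n l p N) x)"
      using K0 by (subst ennreal_plus) simp_all
    then show ?thesis using False unfolding VV_Suc I by simp
  qed
qed

end

context ea
begin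

lemma LL_eq: "{x :: bool list. length x = n} = LL n" by (simp add: LL_def)

lemma main1: "ea_expected_runtime n l p =
   ennreal (\<Sum>m<k. 1 / (1 - p m) ^ (m * l) * (\<Sum>j = 1..l. real (l choose j) * (1 / (1 - (1 - 2 * p m) ^ j))))"
proof -
  let ?pi = "pmf_of_set (LL n)"
  have ne: "LL n \<noteq> {}" by (auto simp: LL_def intro: exI[of _ "replicate n True"])
  interpret S: prob_space SS by (rule SS_prob)
  let ?f = "\<lambda>N z. TN n l N (fst z) (snd z)"
  have meas: "?f N \<in> borel_measurable (measure_pmf ?pi \<Otimes>\<^sub>M SS)" for N
  proof -
    have f: "(\<lambda>z. TN n l N y (snd z)) \<in> borel_measurable (measure_pmf ?pi \<Otimes>\<^sub>M SS)" for y
      using measurable_snd TN_meas by (rule measurable_compose)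
    have g: "fst \<in> measurable (measure_pmf ?pi \<Otimes>\<^sub>M SS) (count_space UNIV)"
      using measurable_fst[of "measure_pmf ?pi" SS] by simp
    show ?thesis using measurable_compose_countable[OF f g] .
  qed
  have inc: "incseq ?f" by (intro incseq_SucI le_funI TN_mono)
  have "ea_expected_runtime n l p = (\<integral>\<^sup>+z. (SUP N. ?f N z) \<partial>(measure_pmf ?pi \<Otimes>\<^sub>M SS))"
    unfolding ea_expected_runtime_def ea_space_def step_rand_def[symmetric] LL_eq
    by (intro nn_integral_cong) (metis TN_sup prod.collapse)
  also have "\<dots> = (SUP N. \<integral>\<^sup>+z. ?f N z \<partial>(measure_pmf ?pi \<Otimes>\<^sub>M SS))"
    by (rule nn_integral_monotone_convergence_SUP[OF inc meas])
  also have "\<dots> = (SUP N. ennreal ((\<Sum>x\<in>LL n. vR n l p N x) / 2 ^ n))"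
  proof (intro SUP_cong refl)
    fix N
    have "(\<integral>\<^sup>+z. ?f N z \<partial>(measure_pmf ?pi \<Otimes>\<^sub>M SS)) = (\<integral>\<^sup>+x. VV N x \<partial>measure_pmf ?pi)"
      unfolding VV_def using S.nn_integral_fst[OF meas[of N]] by simp
    also have "\<dots> = (\<Sum>x\<in>LL n. VV N x) / of_nat (card (LL n))"
      by (rule nn_integral_pmf_of_set[OF ne finite_LL])
    also have "\<dots> = ennreal (\<Sum>x\<in>LL n. vR n l p N x) / ennreal (2 ^ n)"
      using VV_vR by (simp add: sum_ennreal vR_nonneg ennreal_of_nat_eq_real_of_nat)
    also have "\<dots> = ennreal ((\<Sum>x\<in>LL n. vR n l p N x) / 2 ^ n)"
      by (rule divide_ennreal) (simp_all add: sum_nonneg vR_nonneg)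
    finally show "(\<integral>\<^sup>+z. ?f N z \<partial>(measure_pmf ?pi \<Otimes>\<^sub>M SS)) = ennreal ((\<Sum>x\<in>LL n. vR n l p N x) / 2 ^ n)" .
  qed
  also have "\<dots> = ennreal ((\<Sum>x\<in>LL n. GG n l p x) / 2 ^ n)"
  proof -
    let ?a = "\<lambda>N. ennreal ((\<Sum>x\<in>LL n. vR n l p N x) / 2 ^ n)"
    have "incseq ?a"
      by (intro incseq_SucI ennreal_leI divide_right_mono sum_mono vR_mono) simp
    then have L1: "?a \<longlonglongrightarrow> (SUP N. ?a N)" by (rule LIMSEQ_SUP)
    have "(\<lambda>N. (\<Sum>x\<in>LL n. vR n l p N x) / 2 ^ n) \<longlonglongrightarrow> (\<Sum>x\<in>LL n. GG n l p x) / 2 ^ n"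
      by (intro tendsto_divide sum_vR_lim tendsto_const) simp
    then have L2: "?a \<longlonglongrightarrow> ennreal ((\<Sum>x\<in>LL n. GG n l p x) / 2 ^ n)" by (rule tendsto_ennrealI)
    show ?thesis using LIMSEQ_unique[OF L1 L2] .
  qed
  finally show ?thesis unfolding sum_GG .
qed

end

lemma geom_part:
  fixes q :: real and n l k :: nat
  assumes q: "0 < q" "q < 1" and n: "n = k * l" and l: "l > 0"
  shows "(\<Sum>m<k. 1 / (1 - q) ^ (m * l)) = ((1 - q) powr (- real n + real l) - (1 - q) ^ l) / (1 - (1 - q) ^ l)"
proof -
  define s where "s = (1 - q) ^ l"
  have s: "0 < s" "s < 1" unfolding s_def using q l by (auto simp: power_less_one_iff)
  have "(\<Sum>m<k. 1 / (1 - q) ^ (m * l)) = (\<Sum>m<k. (1 / s) ^ m)"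
  proof (intro sum.cong refl)
    fix m
    have "(1 - q) ^ (m * l) = s ^ m" unfolding s_def by (metis power_mult mult.commute)
    then show "1 / (1 - q) ^ (m * l) = (1 / s) ^ m" by (simp add: power_one_over)
  qed
  also have "\<dots> = ((1/s) ^ k - 1) / (1/s - 1)" using s by (intro geometric_sum) simp
  also have "\<dots> = (s * (1/s) ^ k - s) / (1 - s)" using s by (simp add: field_simps)
  also have "s * (1/s) ^ k = (1 - q) powr (- real n + real l)"
  proof -
    have "(1 - q) powr (- real n + real l) = (1 - q) powr (real l) / (1 - q) powr (real n)"
    proof -
      have "- real n + real l = real l - real n" by simp
      then show ?thesis by (simp only: powr_diff)
    qed
    also have "\<dots> = s / s ^ k"
    proof -
      have a: "(1 - q) powr (real l) = s" unfolding s_def using q by (simp add: powr_realpow)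
      have "(1 - q) powr (real n) = (1 - q) ^ n" using q by (simp add: powr_realpow)
      also have "\<dots> = s ^ k" unfolding s_def n by (metis power_mult mult.commute)
      finally show ?thesis using a by simp
    qed
    finally show ?thesis by (simp add: power_one_over divide_inverse power_inverse)
  qed
  finally show ?thesis unfolding s_def .
qed

theorem mainTheorem6:
  fixes n l :: nat and p :: "nat \<Rightarrow> real"
  assumes "n > 0" and "l > 0" and "l dvd n"
    and "\<And>m. m < n div l \<Longrightarrow> 0 < p m \<and> p m < 1"
  shows "ea_expected_runtime n l p =
           ennreal (\<Sum>m = 0..n div l - 1. 1 / (1 - p m) ^ (m * l) *
              (\<Sum>j = 1..l. real (l choose j) * (1 / (1 - (1 - 2 * p m) ^ j)))) \<and>
         (\<forall>q :: real. 0 < q \<and> q < 1 \<longrightarrow>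
           ea_expected_runtime n l (\<lambda>_. q) =
           ennreal (((1 - q) powr (- real n + real l) - (1 - q) ^ l) / (1 - (1 - q) ^ l) *
              (\<Sum>j = 1..l. real (l choose j) * (1 / (1 - (1 - 2 * q) ^ j)))))"
proof -
  interpret ea n l p using assms by unfold_locales auto
  have kk: "{0..n div l - 1} = {..<n div l}" using k_pos by auto
  show ?thesis
  proof (intro conjI allI impI)
    show "ea_expected_runtime n l p =
           ennreal (\<Sum>m = 0..n div l - 1. 1 / (1 - p m) ^ (m * l) *
              (\<Sum>j = 1..l. real (l choose j) * (1 / (1 - (1 - 2 * p m) ^ j))))"
      unfolding kk by (rule main1)
  next
    fix q :: real assume q: "0 < q \<and> q < 1"
    interpret Q: ea n l "\<lambda>_. q" using assms q by unfold_locales auto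
    let ?C = "\<Sum>j = 1..l. real (l choose j) * (1 / (1 - (1 - 2 * q) ^ j))"
    have "ea_expected_runtime n l (\<lambda>_. q) = ennreal (\<Sum>m<n div l. 1 / (1 - q) ^ (m * l) * ?C)"
      by (rule Q.main1)
    also have "(\<Sum>m<n div l. 1 / (1 - q) ^ (m * l) * ?C) = (\<Sum>m<n div l. 1 / (1 - q) ^ (m * l)) * ?C"
      by (simp add: sum_distrib_right)
    also have "(\<Sum>m<n div l. 1 / (1 - q) ^ (m * l)) = ((1 - q) powr (- real n + real l) - (1 - q) ^ l) / (1 - (1 - q) ^ l)"
      using q n_eq assms(2) by (intro geom_part) auto
    finally show "ea_expected_runtime n l (\<lambda>_. q) =
           ennreal (((1 - q) powr (- real n + real l) - (1 - q) ^ l) / (1 - (1 - q) ^ l) *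
              (\<Sum>j = 1..l. real (l choose j) * (1 / (1 - (1 - 2 * q) ^ j))))" .
  qed
qed

end
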